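(* The consecutive patterns $\underline{0102}$ and $\underline{0112}$ are reciprocal: for every $n\ge 1$ and all $S,T\subseteq[n]$, $$|\{\epsilon\in I_n:\operatorname{Em}(\underline{0102},\epsilon)=S,\ \operatorname{Em}(\underline{0112},\epsilon)=T\}|=|\{\epsilon\in I_n:\operatorname{Em}(\underline{0102},\epsilon)=T,\ \operatorname{Em}(\underline{0112},\epsilon)=S\}|.$$
   Context: An inversion sequence of length $n$ is an integer sequence $\epsilon=\epsilon_1\cdots\epsilon_n$ with $0\le\epsilon_i<i$ for all $i$; $I_n$ denotes the set of them. The reduction of an integer word is obtained by replacing every occurrence of its $k$-th smallest distinct value by $k-1$. A consecutive pattern $p=\underline{p_1\cdots p_r}$ occurs in a sequence $\epsilon$ at position $i$ if the reduction of $\epsilon_i\epsilon_{i+1}\cdots\epsilon_{i+r-1}$ equals $p_1\cdots p_r$. $\operatorname{Em}(p,\epsilon)$ is the set of all positions $i$ at which $p$ occurs in $\epsilon$, and $[n]=\{1,\dots,n\}$. *)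

theory Defs
  imports Main
begin

text \<open>Inversion sequences of length n, stored as lists with 0-based list index:
  the paper's epsilon_i is e ! (i - 1), and the condition 0 <= epsilon_i < i
  becomes e ! j < j + 1 for j < n.\<close>
definition inv_seqs :: "nat \<Rightarrow> nat list set" where
  "inv_seqs n = {e. length e = n \<and> (\<forall>j<n. e ! j < Suc j)}"

definition reduction :: "nat list \<Rightarrow> nat list" where
  "reduction w = map (\<lambda>x. card {y \<in> set w. y < x}) w"

definition Em :: "nat list \<Rightarrow> nat list \<Rightarrow> nat set" where
  "Em p e = {i. 1 \<le> i \<and> i + length p - 1 \<le> length e \<and>
                reduction (take (length p) (drop (i - 1) e)) = p}"

end

theory Submission
  imports Defs "HOL-Library.Multiset"
begin

lemma red1: "reduction [a,b,c,d] = [0,1,0,2] \<longleftrightarrow> (a<b \<and> b<d \<and> c=a)"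
proof
  assume h: "reduction [a,b,c,d] = [0,1,0,2]"
  have h1: "card {y \<in> {a,b,c,d}. y < a} = 0" "card {y \<in> {a,b,c,d}. y < b} = 1"
     "card {y \<in> {a,b,c,d}. y < c} = 0" "card {y \<in> {a,b,c,d}. y < d} = 2"
    using h by (simp_all add: reduction_def)
  have fa: "\<forall>y\<in>{a,b,c,d}. \<not> y < a" using h1(1) by (simp add: card_eq_0_iff) blast
  have fc: "\<forall>y\<in>{a,b,c,d}. \<not> y < c" using h1(3) by (simp add: card_eq_0_iff) blast
  have ca: "c = a" using fa fc by auto
  have ab: "a < b"
  proof (rule ccontr)
    assume "\<not> a < b"
    hence "{y \<in> {a,b,c,d}. y < b} = {}" using fa by auto
    thus False using h1(2) by (metis card.empty zero_neq_one)
  qed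
  have bd: "b < d"
  proof (rule ccontr)
    assume "\<not> b < d"
    hence "{y \<in> {a,b,c,d}. y < d} \<subseteq> {a}" using ca by auto
    hence "card {y \<in> {a,b,c,d}. y < d} \<le> 1"
      by (metis card.empty card.insert card_mono empty_iff finite.intros subset_singletonD order_refl insert_not_empty le_less One_nat_def)
    thus False using h1(4) by simp
  qed
  show "a<b \<and> b<d \<and> c=a" using ab bd ca by simp
next
  assume "a<b \<and> b<d \<and> c=a"
  hence a: "a<b" "b<d" "c=a" by auto
  have "{y \<in> {a,b,c,d}. y < a} = {}" "{y \<in> {a,b,c,d}. y < b} = {a}" "{y \<in> {a,b,c,d}. y < d} = {a,b}"
    using a by auto
  thus "reduction [a,b,c,d] = [0,1,0,2]" using a by (simp add: reduction_def)
qed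

lemma red2: "reduction [a,b,c,d] = [0,1,1,2] \<longleftrightarrow> (a<b \<and> b<d \<and> c=b)"
proof
  assume h: "reduction [a,b,c,d] = [0,1,1,2]"
  have h1: "card {y \<in> {a,b,c,d}. y < a} = 0" "card {y \<in> {a,b,c,d}. y < b} = 1"
     "card {y \<in> {a,b,c,d}. y < c} = 1" "card {y \<in> {a,b,c,d}. y < d} = 2"
    using h by (simp_all add: reduction_def)
  have fa: "\<forall>y\<in>{a,b,c,d}. \<not> y < a" using h1(1) by (simp add: card_eq_0_iff) blast
  have ab: "a < b"
  proof (rule ccontr)
    assume "\<not> a < b"
    hence "{y \<in> {a,b,c,d}. y < b} = {}" using fa by auto
    thus False using h1(2) by (metis card.empty zero_neq_one)
  qed
  have ac: "a < c"
  proof (rule ccontr)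
    assume "\<not> a < c"
    hence "{y \<in> {a,b,c,d}. y < c} = {}" using fa by auto
    thus False using h1(3) by (metis card.empty zero_neq_one)
  qed
  have cb: "c = b"
  proof (rule ccontr)
    assume "c \<noteq> b"
    then consider "b < c" | "c < b" by linarith
    thus False
    proof cases
      case 1
      hence "{a,b} \<subseteq> {y \<in> {a,b,c,d}. y < c}" using ab by auto
      hence "card {a,b} \<le> card {y \<in> {a,b,c,d}. y < c}" by (intro card_mono) auto
      thus False using h1(3) ab by simp
    next
      case 2
      hence "{a,c} \<subseteq> {y \<in> {a,b,c,d}. y < b}" using ac by auto
      hence "card {a,c} \<le> card {y \<in> {a,b,c,d}. y < b}" by (intro card_mono) auto
      thus False using h1(2) ac by simp
    qed
  qed
  have bd: "b < d"
  proof (rule ccontr)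
    assume "\<not> b < d"
    hence "{y \<in> {a,b,c,d}. y < d} \<subseteq> {a}" using cb by auto
    hence "card {y \<in> {a,b,c,d}. y < d} \<le> card {a}" by (intro card_mono) auto
    thus False using h1(4) by simp
  qed
  show "a<b \<and> b<d \<and> c=b" using ab bd cb by simp
next
  assume "a<b \<and> b<d \<and> c=b"
  hence a: "a<b" "b<d" "c=b" by auto
  have "{y \<in> {a,b,c,d}. y < a} = {}" "{y \<in> {a,b,c,d}. y < b} = {a}" "{y \<in> {a,b,c,d}. y < d} = {a,b}"
    using a by auto
  thus "reduction [a,b,c,d] = [0,1,1,2]" using a by (simp add: reduction_def)
qed


definition mk :: "nat \<Rightarrow> nat \<Rightarrow> nat \<Rightarrow> nat \<Rightarrow> nat \<Rightarrow> nat set \<times> nat set \<Rightarrow> nat set \<times> nat set" where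
  "mk j p q r u x = (if p<q \<and> q<u \<and> r=p then insert j (fst x) else fst x,
                     if p<q \<and> q<u \<and> r=q then insert j (snd x) else snd x)"

fun G :: "nat \<Rightarrow> nat \<Rightarrow> nat \<Rightarrow> nat \<Rightarrow> nat \<Rightarrow> (nat set \<times> nat set) multiset" where
  "G j p q r 0 = {#({},{})#}"
| "G j p q r (Suc m) = (\<Sum>u<j+3. image_mset (mk j p q r u) (G (Suc j) q r u m))"

definition H :: "nat \<Rightarrow> nat \<Rightarrow> nat \<Rightarrow> nat \<Rightarrow> (nat set \<times> nat set) multiset" where
  "H j q r m = (\<Sum>u<j+3. G (Suc j) q r u m)"

lemma mk_id: "\<not> (p<q \<and> (r=p \<or> r=q)) \<Longrightarrow> mk j p q r u = id"
  by (auto simp: mk_def fun_eq_iff)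

lemma G_np: "\<not> (p<q \<and> (r=p \<or> r=q)) \<Longrightarrow> G j p q r (Suc m) = H j q r m"
  by (simp add: mk_id H_def)

lemma Q1: "\<And>j q q' r. q<r \<Longrightarrow> q'<r \<Longrightarrow> r < j+3 \<Longrightarrow> H j q r m = H j q' r m"
proof (induction m rule: less_induct)
  case (less m)
  show ?case
  proof (cases m)
    case 0 thus ?thesis by (simp add: H_def)
  next
    case (Suc m')
    note less(2-4)
    have key: "G (Suc (Suc j)) r q u' m' = G (Suc (Suc j)) r q' u' m'" if "r < u'" "u' < j+4" for u'
    proof (cases m')
      case 0 thus ?thesis by simp
    next
      case (Suc m'')
      have "G (Suc (Suc j)) r q u' m' = H (Suc (Suc j)) q u' m''" unfolding Suc using less(2) by (intro G_np) auto
      also have "\<dots> = H (Suc (Suc j)) q' u' m''"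
        using less(1)[of m'' q u' q' "Suc (Suc j)"] \<open>m = Suc m'\<close> Suc that less(2,3) by simp
      also have "\<dots> = G (Suc (Suc j)) r q' u' m'" unfolding Suc using less(3) by (intro G_np[symmetric]) auto
      finally show ?thesis .
    qed
    define t where "t x u = G (Suc j) x r u (Suc m')" for x u
    have Hx: "H j x r m = (\<Sum>u<j+3. t x u)" for x by (simp add: H_def t_def Suc)
    have other: "t q u = t q' u" if "u \<noteq> q" "u \<noteq> q'" for u
    proof (cases "u = r")
      case True
      have "mk (Suc j) q r r = mk (Suc j) q' r r" using less(2,3) by (auto simp: mk_def fun_eq_iff)
      thus ?thesis using True by (simp add: t_def)
    next
      case False
      thus ?thesis using that by (simp add: t_def mk_id)
    qed
    have pair: "t q q + t q q' = t q' q' + t q' q"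
    proof (cases "q = q'")
      case True thus ?thesis by simp
    next
      case False
      have e1: "t q q + t q q' = (\<Sum>u'<j+4. image_mset (mk (Suc j) q r q u') (G (Suc (Suc j)) r q u' m') + G (Suc (Suc j)) r q' u' m')"
        using False less(2,3) by (simp add: t_def mk_id sum.distrib eval_nat_numeral)
      have e2: "t q' q' + t q' q = (\<Sum>u'<j+4. image_mset (mk (Suc j) q' r q' u') (G (Suc (Suc j)) r q' u' m') + G (Suc (Suc j)) r q u' m')"
        using False less(2,3) by (simp add: t_def mk_id sum.distrib eval_nat_numeral)
      show ?thesis unfolding e1 e2
      proof (rule sum.cong[OF refl])
        fix u' assume u': "u' \<in> {..<j+4}"
        show "image_mset (mk (Suc j) q r q u') (G (Suc (Suc j)) r q u' m') + G (Suc (Suc j)) r q' u' m' =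
          image_mset (mk (Suc j) q' r q' u') (G (Suc (Suc j)) r q' u' m') + G (Suc (Suc j)) r q u' m'"
        proof (cases "r < u'")
          case True
          have "mk (Suc j) q r q u' = mk (Suc j) q' r q' u'" using less(2,3) by (auto simp: mk_def fun_eq_iff)
          thus ?thesis using key[OF True] u' by simp
        next
          case False
          have "mk (Suc j) q r q u' = id" "mk (Suc j) q' r q' u' = id" using False by (auto simp: mk_def fun_eq_iff)
          thus ?thesis by (simp add: add.commute)
        qed
      qed
    qed
    show ?thesis
    proof (cases "q = q'")
      case True thus ?thesis by simp
    next
      case False
      have qin: "q \<in> {..<j+3}" "q' \<in> {..<j+3}" using less(2-4) by auto
      have split: "(\<Sum>u<j+3. t x u) = t x q + t x q' + (\<Sum>u\<in>{..<j+3}-{q,q'}. t x u)" for x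
      proof -
        have "(\<Sum>u<j+3. t x u) = t x q + (\<Sum>u\<in>{..<j+3}-{q}. t x u)" using qin by (simp add: sum.remove)
        also have "(\<Sum>u\<in>{..<j+3}-{q}. t x u) = t x q' + (\<Sum>u\<in>{..<j+3}-{q}-{q'}. t x u)"
          using qin False by (intro sum.remove) auto
        finally show ?thesis by (simp add: Diff_insert2[symmetric] add.assoc insert_commute)
      qed
      have "(\<Sum>u\<in>{..<j+3}-{q,q'}. t q u) = (\<Sum>u\<in>{..<j+3}-{q,q'}. t q' u)"
        by (rule sum.cong) (auto intro: other)
      thus ?thesis unfolding Hx split using pair by (simp add: add.commute add.left_commute)
    qed
  qed
qed

lemma image_mset_sum: "image_mset f (sum g A) = (\<Sum>x\<in>A. image_mset f (g x))"
  by (induction A rule: infinite_finite_induct) auto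

abbreviation sw :: "(nat set \<times> nat set) multiset \<Rightarrow> (nat set \<times> nat set) multiset" where
  "sw M \<equiv> image_mset prod.swap M"

lemma Q3: "\<And>j p q r. \<not> (p<q \<and> (r=p \<or> r=q)) \<Longrightarrow> r < j+3 \<Longrightarrow> sw (G j p q r m) = G j p q r m"
proof (induction m rule: less_induct)
  case (less m)
  show ?case
  proof (cases m)
    case 0 thus ?thesis by simp
  next
    case (Suc m1)
    have GH: "G j p q r m = (\<Sum>u<j+3. G (Suc j) q r u m1)"
      unfolding Suc using less(2) by (simp add: G_np H_def del: G.simps)
    have np: "sw (G (Suc j) q r u m1) = G (Suc j) q r u m1" if "\<not> (q<r \<and> (u=q \<or> u=r))" "u < j+3" for u
      using less(1)[of m1 q r u "Suc j"] that Suc by simp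
    show ?thesis
    proof (cases "q < r")
      case False
      show ?thesis unfolding GH image_mset_sum
        by (rule sum.cong[OF refl]) (use False np in auto)
    next
      case True
      have qin: "q \<in> {..<j+3}" "r \<in> {..<j+3}" using True less(3) by auto
      have split: "(\<Sum>u<j+3. f u) = f q + f r + (\<Sum>u\<in>{..<j+3}-{q,r}. f u)" for f :: "nat \<Rightarrow> (nat set \<times> nat set) multiset"
      proof -
        have "(\<Sum>u<j+3. f u) = f q + (\<Sum>u\<in>{..<j+3}-{q}. f u)" using qin by (simp add: sum.remove)
        also have "(\<Sum>u\<in>{..<j+3}-{q}. f u) = f r + (\<Sum>u\<in>{..<j+3}-{q}-{r}. f u)"
          using qin True by (intro sum.remove) auto
        finally show ?thesis by (simp add: Diff_insert2[symmetric] add.assoc insert_commute)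
      qed
      have rest: "(\<Sum>u\<in>{..<j+3}-{q,r}. sw (G (Suc j) q r u m1)) = (\<Sum>u\<in>{..<j+3}-{q,r}. G (Suc j) q r u m1)"
        by (rule sum.cong[OF refl]) (use np in auto)
      have pairs: "sw (G (Suc j) q r q m1) + sw (G (Suc j) q r r m1) = G (Suc j) q r q m1 + G (Suc j) q r r m1"
      proof (cases m1)
        case 0 thus ?thesis by simp
      next
        case (Suc m')
        have e: "G (Suc j) q r x m1 = (\<Sum>u'<j+4. image_mset (mk (Suc j) q r x u') (G (Suc (Suc j)) r x u' m'))" for x
          by (simp add: Suc eval_nat_numeral)
        have swG: "sw (G (Suc (Suc j)) r x u' m') = G (Suc (Suc j)) r x u' m'" if "x \<le> r" "u' < j+4" for x u'
          using less(1)[of m' r x u' "Suc (Suc j)"] that \<open>m = Suc m1\<close> Suc by simp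
        have eqG: "G (Suc (Suc j)) r q u' m' = G (Suc (Suc j)) r r u' m'" if "r < u'" "u' < j+4" for u'
        proof (cases m')
          case 0 thus ?thesis by simp
        next
          case (Suc m'')
          have "G (Suc (Suc j)) r q u' m' = H (Suc (Suc j)) q u' m''"
            unfolding Suc using True by (intro G_np) auto
          also have "\<dots> = H (Suc (Suc j)) r u' m''"
            using Q1[of q u' r "Suc (Suc j)" m''] True that by simp
          also have "\<dots> = G (Suc (Suc j)) r r u' m'"
            unfolding Suc by (intro G_np[symmetric]) auto
          finally show ?thesis .
        qed
        have swmk: "prod.swap \<circ> mk (Suc j) q r q u' = mk (Suc j) q r r u' \<circ> prod.swap" for u'
          using True by (auto simp: mk_def fun_eq_iff)
        have swmk2: "prod.swap \<circ> mk (Suc j) q r r u' = mk (Suc j) q r q u' \<circ> prod.swap" for u'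
          using True by (auto simp: mk_def fun_eq_iff)
        show ?thesis unfolding e image_mset_sum sum.distrib[symmetric]
        proof (rule sum.cong[OF refl])
          fix u' assume u': "u' \<in> {..<j+4}"
          have A: "sw (image_mset (mk (Suc j) q r q u') (G (Suc (Suc j)) r q u' m'))
              = image_mset (mk (Suc j) q r r u') (G (Suc (Suc j)) r q u' m')"
          proof -
            have "sw (image_mset (mk (Suc j) q r q u') (G (Suc (Suc j)) r q u' m')) = image_mset (prod.swap \<circ> mk (Suc j) q r q u') (G (Suc (Suc j)) r q u' m')"
              by (simp add: multiset.map_comp)
            also have "\<dots> = image_mset (mk (Suc j) q r r u') (sw (G (Suc (Suc j)) r q u' m'))"
              by (simp add: swmk multiset.map_comp)
            finally show ?thesis using swG[of q u'] True u' by simp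
          qed
          have B: "sw (image_mset (mk (Suc j) q r r u') (G (Suc (Suc j)) r r u' m'))
              = image_mset (mk (Suc j) q r q u') (G (Suc (Suc j)) r r u' m')"
          proof -
            have "sw (image_mset (mk (Suc j) q r r u') (G (Suc (Suc j)) r r u' m')) = image_mset (prod.swap \<circ> mk (Suc j) q r r u') (G (Suc (Suc j)) r r u' m')"
              by (simp add: multiset.map_comp)
            also have "\<dots> = image_mset (mk (Suc j) q r q u') (sw (G (Suc (Suc j)) r r u' m'))"
              by (simp add: swmk2 multiset.map_comp)
            finally show ?thesis using swG[of r u'] True u' by simp
          qed
          show "sw (image_mset (mk (Suc j) q r q u') (G (Suc (Suc j)) r q u' m')) +
                sw (image_mset (mk (Suc j) q r r u') (G (Suc (Suc j)) r r u' m')) =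
                image_mset (mk (Suc j) q r q u') (G (Suc (Suc j)) r q u' m') +
                image_mset (mk (Suc j) q r r u') (G (Suc (Suc j)) r r u' m')"
          proof (cases "r < u'")
            case True
            thus ?thesis unfolding A B using eqG[OF True] u' by (simp add: add.commute)
          next
            case False
            hence "mk (Suc j) q r q u' = id" "mk (Suc j) q r r u' = id" by (auto simp: mk_def fun_eq_iff)
            thus ?thesis using swG[of q u'] swG[of r u'] \<open>q<r\<close> u' by simp
          qed
        qed
      qed
      show ?thesis unfolding GH image_mset_sum
        using split[of "\<lambda>u. sw (G (Suc j) q r u m1)"] split[of "\<lambda>u. G (Suc j) q r u m1"] rest pairs
        by simp
    qed
  qed
qed



fun emp :: "nat \<Rightarrow> nat list \<Rightarrow> nat set \<times> nat set" where
  "emp j (p#q#r#u#s) = mk j p q r u (emp (Suc j) (q#r#u#s))"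
| "emp j _ = ({},{})"

fun sufs :: "nat \<Rightarrow> nat \<Rightarrow> nat list list" where
  "sufs j 0 = [[]]"
| "sufs j (Suc m) = concat (map (\<lambda>u. map (Cons u) (sufs (Suc j) m)) [0..<j+3])"

lemma bridge: "mset (map (\<lambda>s. emp j (p#q#r#s)) (sufs j m)) = G j p q r m"
proof (induction m arbitrary: j p q r)
  case 0 thus ?case by simp
next
  case (Suc m)
  have "mset (map (\<lambda>s. emp j (p#q#r#s)) (sufs j (Suc m)))
     = (\<Sum>u\<leftarrow>[0..<j+3]. mset (map (\<lambda>s. emp j (p#q#r#u#s)) (sufs (Suc j) m)))"
    by (simp add: map_concat mset_concat comp_def)
  also have "\<dots> = (\<Sum>u\<leftarrow>[0..<j+3]. image_mset (mk j p q r u) (G (Suc j) q r u m))"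
    by (simp add: Suc.IH[symmetric] multiset.map_comp comp_def)
  also have "\<dots> = (\<Sum>u<j+3. image_mset (mk j p q r u) (G (Suc j) q r u m))"
    by (simp add: sum_set_upt_conv_sum_list_nat[symmetric] atLeast0LessThan)
  finally show ?case by simp
qed

lemma set_sufs: "set (sufs j m) = {s. length s = m \<and> (\<forall>i<m. s!i < j+3+i)}"
proof (induction m arbitrary: j)
  case 0 thus ?case by auto
next
  case (Suc m)
  show ?case
  proof (intro set_eqI iffI)
    fix s assume "s \<in> set (sufs j (Suc m))"
    then obtain u s' where "u < j+3" "s' \<in> set (sufs (Suc j) m)" "s = u # s'" by auto
    thus "s \<in> {s. length s = Suc m \<and> (\<forall>i<Suc m. s!i < j+3+i)}"
      using Suc.IH by (auto simp: nth_Cons split: nat.splits)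
  next
    fix s assume s: "s \<in> {s. length s = Suc m \<and> (\<forall>i<Suc m. s!i < j+3+i)}"
    then obtain u s' where us: "s = u # s'" by (cases s) auto
    have "u < j+3" using s us by force
    moreover have "s' \<in> set (sufs (Suc j) m)"
    proof -
      have "length s' = m" using s us by simp
      moreover have "\<forall>i<m. s'!i < Suc j + 3 + i"
      proof (intro allI impI)
        fix i assume "i < m"
        hence "s!(Suc i) < j+3+Suc i" using s by blast
        thus "s'!i < Suc j + 3 + i" using us by simp
      qed
      ultimately show ?thesis using Suc.IH by simp
    qed
    ultimately show "s \<in> set (sufs j (Suc m))" using us by auto
  qed
qed

lemma distinct_concat_cons: "distinct xs \<Longrightarrow> (\<And>u. distinct (f u)) \<Longrightarrow> distinct (concat (map (\<lambda>u. map (Cons u) (f u)) xs))"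
  by (induction xs) (auto simp: distinct_map)

lemma distinct_sufs: "distinct (sufs j m)"
proof (induction m arbitrary: j)
  case 0 thus ?case by simp
next
  case (Suc m)
  show ?case using Suc.IH by (simp only: sufs.simps) (intro distinct_concat_cons, auto)
qed

definition win1 :: "nat list \<Rightarrow> nat \<Rightarrow> bool" where
  "win1 l k \<longleftrightarrow> k + 4 \<le> length l \<and> l!k < l!(k+1) \<and> l!(k+1) < l!(k+3) \<and> l!(k+2) = l!k"
definition win2 :: "nat list \<Rightarrow> nat \<Rightarrow> bool" where
  "win2 l k \<longleftrightarrow> k + 4 \<le> length l \<and> l!k < l!(k+1) \<and> l!(k+1) < l!(k+3) \<and> l!(k+2) = l!(k+1)"

lemma win1_Suc: "win1 (x#l) (Suc k) = win1 l k" by (simp add: win1_def add.commute)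
lemma win2_Suc: "win2 (x#l) (Suc k) = win2 l k" by (simp add: win2_def add.commute)

lemma emp_fst': "i \<in> fst (emp j l) \<longleftrightarrow> j \<le> i \<and> win1 l (i-j)"
proof (induction j l arbitrary: i rule: emp.induct)
  case (1 j p q r u s)
  show ?case
  proof (cases "i = j")
    case True
    have "j \<notin> fst (emp (Suc j) (q#r#u#s))" using 1[of j] by simp
    thus ?thesis using True by (simp add: mk_def win1_def)
  next
    case False
    have "i \<in> fst (emp j (p#q#r#u#s)) \<longleftrightarrow> i \<in> fst (emp (Suc j) (q#r#u#s))" using False by (simp add: mk_def)
    also have "\<dots> \<longleftrightarrow> Suc j \<le> i \<and> win1 (q#r#u#s) (i - Suc j)" by (rule 1)
    also have "\<dots> \<longleftrightarrow> j \<le> i \<and> win1 (p#q#r#u#s) (i - j)"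
    proof (cases "j < i")
      case True
      hence "i - j = Suc (i - Suc j)" by simp
      thus ?thesis using True by (simp add: win1_Suc)
    next
      case False thus ?thesis using \<open>i \<noteq> j\<close> by simp
    qed
    finally show ?thesis .
  qed
qed (auto simp: win1_def)

lemma emp_snd': "i \<in> snd (emp j l) \<longleftrightarrow> j \<le> i \<and> win2 l (i-j)"
proof (induction j l arbitrary: i rule: emp.induct)
  case (1 j p q r u s)
  show ?case
  proof (cases "i = j")
    case True
    have "j \<notin> snd (emp (Suc j) (q#r#u#s))" using 1[of j] by simp
    thus ?thesis using True by (simp add: mk_def win2_def)
  next
    case False
    have "i \<in> snd (emp j (p#q#r#u#s)) \<longleftrightarrow> i \<in> snd (emp (Suc j) (q#r#u#s))" using False by (simp add: mk_def)
    also have "\<dots> \<longleftrightarrow> Suc j \<le> i \<and> win2 (q#r#u#s) (i - Suc j)" by (rule 1)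
    also have "\<dots> \<longleftrightarrow> j \<le> i \<and> win2 (p#q#r#u#s) (i - j)"
    proof (cases "j < i")
      case True
      hence "i - j = Suc (i - Suc j)" by simp
      thus ?thesis using True by (simp add: win2_Suc)
    next
      case False thus ?thesis using \<open>i \<noteq> j\<close> by simp
    qed
    finally show ?thesis .
  qed
qed (auto simp: win2_def)

lemma take4: "Suc (Suc (Suc k)) < length l \<Longrightarrow> take (Suc (Suc (Suc (Suc 0)))) (drop k l) = [l!k, l!(Suc k), l!(Suc (Suc k)), l!(Suc (Suc (Suc k)))]"
proof -
  assume a: "Suc (Suc (Suc k)) < length l"
  have d: "drop i l = l!i # drop (Suc i) l" if "i < length l" for i using that by (simp add: Cons_nth_drop_Suc)
  have "drop k l = l!k # l!(Suc k) # l!(Suc (Suc k)) # l!(Suc (Suc (Suc k))) # drop (Suc (Suc (Suc (Suc k)))) l"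
    using d[of k] d[of "Suc k"] d[of "Suc (Suc k)"] d[of "Suc (Suc (Suc k))"] a by simp
  thus ?thesis by simp
qed

lemma Em1: "Em [0,1,0,2] e = fst (emp 1 e)"
proof -
  have "i \<in> Em [0,1,0,2] e \<longleftrightarrow> i \<in> fst (emp 1 e)" for i
  proof (cases "1 \<le> i \<and> i + 3 \<le> length e")
    case True
    have t: "take (Suc (Suc (Suc (Suc 0)))) (drop (i - Suc 0) e) = [e!(i-1), e!i, e!(Suc i), e!(Suc (Suc i))]"
      using take4[of "i-1" e] True by (simp add: Suc_diff_Suc)
    have "i \<in> Em [0,1,0,2] e \<longleftrightarrow> reduction [e!(i-1), e!i, e!(i+1), e!(i+2)] = [0,1,0,2]"
      using True t unfolding Em_def by (simp add: eval_nat_numeral)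
    also have "\<dots> \<longleftrightarrow> i \<in> fst (emp 1 e)"
      unfolding red1 emp_fst' win1_def using True by (simp add: eval_nat_numeral)
    finally show ?thesis .
  next
    case False thus ?thesis unfolding Em_def emp_fst' win1_def by auto
  qed
  thus ?thesis by blast
qed

lemma Em2: "Em [0,1,1,2] e = snd (emp 1 e)"
proof -
  have "i \<in> Em [0,1,1,2] e \<longleftrightarrow> i \<in> snd (emp 1 e)" for i
  proof (cases "1 \<le> i \<and> i + 3 \<le> length e")
    case True
    have t: "take (Suc (Suc (Suc (Suc 0)))) (drop (i - Suc 0) e) = [e!(i-1), e!i, e!(Suc i), e!(Suc (Suc i))]"
      using take4[of "i-1" e] True by (simp add: Suc_diff_Suc)
    have "i \<in> Em [0,1,1,2] e \<longleftrightarrow> reduction [e!(i-1), e!i, e!(i+1), e!(i+2)] = [0,1,1,2]"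
      using True t unfolding Em_def by (simp add: eval_nat_numeral)
    also have "\<dots> \<longleftrightarrow> i \<in> snd (emp 1 e)"
      unfolding red2 emp_snd' win2_def using True by (simp add: eval_nat_numeral)
    finally show ?thesis .
  next
    case False thus ?thesis unfolding Em_def emp_snd' win2_def by auto
  qed
  thus ?thesis by blast
qed

lemma emp_shift: "emp 0 (0#0#l) = emp 1 (0#l)"
proof (cases l)
  case Nil thus ?thesis by simp
next
  case (Cons b l')
  show ?thesis
  proof (cases l')
    case Nil thus ?thesis using Cons by simp
  next
    case (Cons u s)
    thus ?thesis using \<open>l = b # l'\<close> by (simp add: mk_id)
  qed
qed

lemma count_sw: "count (sw M) (S,T) = count M (T,S)"
proof -
  have "prod.swap -` {(S,T)} = {(T,S)}" by auto
  thus ?thesis by (cases "(T,S) \<in># M") (auto simp: count_image_mset Int_insert_right not_in_iff)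
qed

lemma main_ge2:
  fixes n :: nat and S T :: "nat set"
  assumes "n \<ge> 2"
  shows "card {e \<in> inv_seqs n. Em [0,1,0,2] e = S \<and> Em [0,1,1,2] e = T}
       = card {e \<in> inv_seqs n. Em [0,1,0,2] e = T \<and> Em [0,1,1,2] e = S}"
proof -
  define m where "m = n - 2"
  have n: "n = Suc (Suc m)" using assms m_def by simp
  define L0 where "L0 = concat (map (\<lambda>b. map (Cons b) (sufs 0 m)) [0..<2])"
  define L where "L = map (Cons 0) L0"
  have dL: "distinct L" unfolding L_def L0_def
    by (simp add: distinct_map) (intro distinct_concat_cons distinct_sufs, simp)
  have sL: "set L = inv_seqs n"
  proof (intro set_eqI iffI)
    fix e assume "e \<in> set L"
    then obtain b s where e: "e = 0#b#s" "b < 2" "s \<in> set (sufs 0 m)" unfolding L_def L0_def by auto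
    hence s: "length s = m" "\<forall>i<m. s!i < 3+i" using set_sufs by auto
    show "e \<in> inv_seqs n" unfolding inv_seqs_def
    proof (intro CollectI conjI allI impI)
      show "length e = n" using e s n by simp
      fix j assume "j < n"
      show "e!j < Suc j"
      proof (cases j)
        case 0 thus ?thesis using e by simp
      next
        case (Suc j')
        show ?thesis
        proof (cases j')
          case 0 thus ?thesis using e Suc by simp
        next
          case (Suc i)
          hence "i < m" using \<open>j < n\<close> \<open>j = Suc j'\<close> n by simp
          hence "s!i < 3+i" using s by blast
          thus ?thesis using e Suc \<open>j = Suc j'\<close> by simp
        qed
      qed
    qed
  next
    fix e assume e: "e \<in> inv_seqs n"
    hence len: "length e = Suc (Suc m)" and lt: "\<forall>j<n. e!j < Suc j" unfolding inv_seqs_def n by auto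
    then obtain a b s where abs: "e = a#b#s" by (metis length_Suc_conv)
    have "e!0 < Suc 0" "e!1 < Suc 1" using lt n by auto
    hence a: "a = 0" and b: "b < 2" using abs by auto
    have "s \<in> set (sufs 0 m)" unfolding set_sufs
    proof (intro CollectI conjI allI impI)
      show "length s = m" using len abs by simp
      fix i assume "i < m"
      hence "e!(Suc (Suc i)) < Suc (Suc (Suc i))" using lt n by simp
      thus "s!i < 0+3+i" using abs by simp
    qed
    hence "b # s \<in> set L0" unfolding L0_def using b by auto
    thus "e \<in> set L" unfolding L_def using a abs by auto
  qed
  define M where "M = mset (map (emp 1) L)"
  have MG: "M = (\<Sum>b<2. G 0 0 0 b m)"
  proof -
    have "M = mset (map (\<lambda>l. emp 0 (0#0#l)) L0)" unfolding M_def L_def by (simp add: emp_shift comp_def)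
    also have "\<dots> = (\<Sum>b\<leftarrow>[0..<2]. mset (map (\<lambda>s. emp 0 (0#0#b#s)) (sufs 0 m)))"
      unfolding L0_def by (simp add: map_concat mset_concat comp_def)
    also have "\<dots> = (\<Sum>b\<leftarrow>[0..<2]. G 0 0 0 b m)" by (simp only: bridge)
    also have "\<dots> = (\<Sum>b<2. G 0 0 0 b m)"
      by (simp add: sum_set_upt_conv_sum_list_nat[symmetric] atLeast0LessThan)
    finally show ?thesis .
  qed
  have swM: "sw M = M" unfolding MG image_mset_sum
    by (rule sum.cong[OF refl]) (rule Q3, auto)
  have cnt: "card {e \<in> inv_seqs n. Em [0,1,0,2] e = X \<and> Em [0,1,1,2] e = Y} = count M (X,Y)" for X Y
  proof -
    have "{e \<in> inv_seqs n. Em [0,1,0,2] e = X \<and> Em [0,1,1,2] e = Y} = {e. emp 1 e = (X,Y)} \<inter> set L"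
    proof -
      have E2: "emp 1 e = (X,Y) \<longleftrightarrow> (Em [0,1,0,2] e = X \<and> Em [0,1,1,2] e = Y)" for e
        unfolding Em1 Em2 by (cases "emp 1 e") simp
      show ?thesis unfolding E2 sL by blast
    qed
    hence "card {e \<in> inv_seqs n. Em [0,1,0,2] e = X \<and> Em [0,1,1,2] e = Y} = length (filter (\<lambda>e. emp 1 e = (X,Y)) L)"
      using distinct_length_filter[OF dL] by simp
    also have "\<dots> = count M (X,Y)" unfolding M_def count_mset count_list_eq_length_filter
      by (simp add: filter_map comp_def eq_commute)
    finally show ?thesis .
  qed
  show ?thesis unfolding cnt using count_sw[of M S T] swM by simp
qed


theorem mainTheorem1:
  fixes n :: nat and S T :: "nat set"
  assumes "n \<ge> 1" and "S \<subseteq> {1..n}" and "T \<subseteq> {1..n}"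
  shows "card {e \<in> inv_seqs n. Em [0,1,0,2] e = S \<and> Em [0,1,1,2] e = T}
       = card {e \<in> inv_seqs n. Em [0,1,0,2] e = T \<and> Em [0,1,1,2] e = S}"
proof (cases "n \<ge> 2")
  case True thus ?thesis by (rule main_ge2)
next
  case False
  hence n: "n = 1" using assms(1) by simp
  have E: "Em p e = {}" if "e \<in> inv_seqs n" "length p = 4" for p e
    using that n unfolding Em_def inv_seqs_def by auto
  have "{e \<in> inv_seqs n. Em [0,1,0,2] e = S \<and> Em [0,1,1,2] e = T}
      = {e \<in> inv_seqs n. Em [0,1,0,2] e = T \<and> Em [0,1,1,2] e = S}"
    using E by auto
  thus ?thesis by simp
qed

end
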